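(* Let $(M,ds^2)$ be an $n$-dimensional Riemannian manifold, $1\le p\le n$. For every $x\in M$ and every $p$-form $g$ at $x$, $$p(n-p)\lambda_{\mathfrak R}(x)|g|^2\le\sum_{i_1<\cdots<i_p}\langle\mathfrak R\xi^g_{i_1\cdots i_p},\xi^g_{i_1\cdots i_p}\rangle\le p(n-p)\Lambda_{\mathfrak R}(x)|g|^2.$$
   Context: Local orthonormal frame $e_i$ with dual coframe $\omega^i$, summation convention; $g=\sum_{i_1<\dots<i_p}g_{i_1\cdots i_p}\omega^{i_1}\wedge\dots\wedge\omega^{i_p}$ with antisymmetrically extended coefficients. Curvature: $R_{XY}=D_XD_Y-D_YD_X-D_{[X,Y]}$ for the Levi-Civita connection $D$, $R_{ijk\ell}=\langle R_{e_ie_j}e_k,e_\ell\rangle$, and the curvature operator $\mathfrak R$ on $2$-forms is the self-adjoint map $\mathfrak R(\omega^i\wedge\omega^j)=R_{ij\ell k}\,\omega^k\wedge\omega^\ell$; $\lambda_{\mathfrak R}(x)$ and $\Lambda_{\mathfrak R}(x)$ are its smallest and largest eigenvalues at $x$. For $i_1<\dots<i_p$, $\xi^g_{i_1\cdots i_p}:=\sum_{a=1}^p\sum_{i=1}^n g_{i_1\cdots(i)_a\cdots i_p}\,\omega^i\wedge\omega^{i_a}$, where $(i)_a$ means the index in the $a$-th slot is replaced by $i$. *)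

theory Defs
  imports Complex_Main
begin

(* Pointwise data at x in an n-dimensional Riemannian manifold, w.r.t. an orthonormal
   frame e_0..e_{n-1}.  Indices are 0..n-1.  R i j k l = R_{ijkl} = <R_{e_i e_j} e_k, e_l>. *)

definition curvature_tensor :: "nat \<Rightarrow> (nat \<Rightarrow> nat \<Rightarrow> nat \<Rightarrow> nat \<Rightarrow> real) \<Rightarrow> bool" where
  "curvature_tensor n R \<longleftrightarrow>
     (\<forall>i<n. \<forall>j<n. \<forall>k<n. \<forall>l<n.
        R i j k l = - R j i k l \<and> R i j k l = - R i j l k \<and> R i j k l = R k l i j \<and>
        R i j k l + R j k i l + R k i j l = 0)"

(* A 2-form is represented by its antisymmetrically extended coefficient function a,
   i.e. sum_{k<l} a k l w^k /\ w^l. *)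
definition two_form :: "nat \<Rightarrow> (nat \<Rightarrow> nat \<Rightarrow> real) \<Rightarrow> bool" where
  "two_form n a \<longleftrightarrow> (\<forall>k<n. \<forall>l<n. a k l = - a l k)"

(* Coefficients (antisymmetrically extended) of  sum_{k,l} c k l  w^k /\ w^l. *)
definition wedge_coeffs :: "(nat \<Rightarrow> nat \<Rightarrow> real) \<Rightarrow> nat \<Rightarrow> nat \<Rightarrow> real" where
  "wedge_coeffs c k l = c k l - c l k"

(* Curvature operator: R(w^i /\ w^j) = R_{ijlk} w^k /\ w^l, extended linearly. *)
definition curv_op :: "nat \<Rightarrow> (nat \<Rightarrow> nat \<Rightarrow> nat \<Rightarrow> nat \<Rightarrow> real) \<Rightarrow>
    (nat \<Rightarrow> nat \<Rightarrow> real) \<Rightarrow> nat \<Rightarrow> nat \<Rightarrow> real" where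
  "curv_op n R a = wedge_coeffs (\<lambda>k l. \<Sum>i<n. \<Sum>j<n. (if i < j then a i j * R i j l k else 0))"

definition inner2 :: "nat \<Rightarrow> (nat \<Rightarrow> nat \<Rightarrow> real) \<Rightarrow> (nat \<Rightarrow> nat \<Rightarrow> real) \<Rightarrow> real" where
  "inner2 n a b = (\<Sum>k<n. \<Sum>l<n. (if k < l then a k l * b k l else 0))"

definition curv_eigenvalues :: "nat \<Rightarrow> (nat \<Rightarrow> nat \<Rightarrow> nat \<Rightarrow> nat \<Rightarrow> real) \<Rightarrow> real set" where
  "curv_eigenvalues n R = {\<mu>. \<exists>a. two_form n a \<and> (\<exists>k<n. \<exists>l<n. k < l \<and> a k l \<noteq> 0) \<and>
       (\<forall>k<n. \<forall>l<n. curv_op n R a k l = \<mu> * a k l)}"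

definition lambda_R :: "nat \<Rightarrow> (nat \<Rightarrow> nat \<Rightarrow> nat \<Rightarrow> nat \<Rightarrow> real) \<Rightarrow> real" where
  "lambda_R n R = Min (curv_eigenvalues n R)"

definition Lambda_R :: "nat \<Rightarrow> (nat \<Rightarrow> nat \<Rightarrow> nat \<Rightarrow> nat \<Rightarrow> real) \<Rightarrow> real" where
  "Lambda_R n R = Max (curv_eigenvalues n R)"

(* A p-form at the point: coefficient function on index lists of length p with entries < n,
   antisymmetrically extended (g = sum over increasing I of g I w^{i_1}/\.../\w^{i_p}). *)
definition p_form :: "nat \<Rightarrow> nat \<Rightarrow> (nat list \<Rightarrow> real) \<Rightarrow> bool" where
  "p_form n p g \<longleftrightarrow> (\<forall>xs. length xs = p \<longrightarrow> set xs \<subseteq> {..<n} \<longrightarrow>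
      (\<forall>a b. a < b \<and> b < p \<longrightarrow> g (xs[a := xs ! b, b := xs ! a]) = - g xs))"

definition incr_indices :: "nat \<Rightarrow> nat \<Rightarrow> nat list set" where
  "incr_indices n p = {xs. length xs = p \<and> sorted_wrt (<) xs \<and> set xs \<subseteq> {..<n}}"

definition form_norm_sq :: "nat \<Rightarrow> nat \<Rightarrow> (nat list \<Rightarrow> real) \<Rightarrow> real" where
  "form_norm_sq n p g = (\<Sum>I\<in>incr_indices n p. (g I)\<^sup>2)"

(* xi^g_I = sum_{a=1}^p sum_{i} g_{i_1..(i)_a..i_p} w^i /\ w^{i_a}  (coefficients) *)
definition xi :: "nat \<Rightarrow> nat \<Rightarrow> (nat list \<Rightarrow> real) \<Rightarrow> nat list \<Rightarrow> nat \<Rightarrow> nat \<Rightarrow> real" where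
  "xi n p g I = wedge_coeffs (\<lambda>k l. \<Sum>a<p. (if I ! a = l then g (I[a := k]) else 0))"

end

theory Submission
  imports Defs "HOL-Combinatorics.List_Permutation" "HOL-Combinatorics.Transposition"
    "HOL-Analysis.Function_Topology" "Jordan_Normal_Form.Char_Poly"
begin


lemma pform_swap_sq:
  assumes "p_form n p g" "length xs = p" "set xs \<subseteq> {..<n}" "a < p" "b < p"
  shows "(g (xs[a := xs ! b, b := xs ! a]))\<^sup>2 = (g xs)\<^sup>2"
proof (cases "a = b")
  case True then show ?thesis by simp
next
  case False
  show ?thesis
  proof (cases "a < b")
    case True
    then have "g (xs[a := xs ! b, b := xs ! a]) = - g xs" using assms unfolding p_form_def by blast
    then show ?thesis by simp
  next
    case False
    with \<open>a \<noteq> b\<close> have "b < a" by simp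
    then have "g (xs[b := xs ! a, a := xs ! b]) = - g xs" using assms unfolding p_form_def by blast
    moreover have "xs[b := xs ! a, a := xs ! b] = xs[a := xs ! b, b := xs ! a]"
      using \<open>b < a\<close> by (simp add: list_update_swap)
    ultimately show ?thesis by simp
  qed
qed

lemma permute_list_transpose:
  assumes "a < length xs" "b < length xs"
  shows "permute_list (Transposition.transpose a b) xs = xs[a := xs ! b, b := xs ! a]"
proof (rule nth_equalityI)
  show "length (permute_list (Transposition.transpose a b) xs) = length (xs[a := xs ! b, b := xs ! a])" by simp
next
  fix i assume "i < length (permute_list (Transposition.transpose a b) xs)"
  then have i: "i < length xs" by simp
  have "Transposition.transpose a b permutes {..<length xs}"
    using assms by (simp add: permutes_swap_id)
  then show "permute_list (Transposition.transpose a b) xs ! i = xs[a := xs ! b, b := xs ! a] ! i"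
    using i assms by (auto simp: permute_list_nth nth_list_update transpose_def)
qed

lemma pform_perm_sq:
  assumes "p_form n p g" "q permutes {..<p}"
  shows "\<forall>xs. length xs = p \<longrightarrow> set xs \<subseteq> {..<n} \<longrightarrow> (g (permute_list q xs))\<^sup>2 = (g xs)\<^sup>2"
proof (rule permutes_induct[OF assms(2) finite_lessThan])
  show "\<forall>xs. length xs = p \<longrightarrow> set xs \<subseteq> {..<n} \<longrightarrow> (g (permute_list id xs))\<^sup>2 = (g xs)\<^sup>2"
    by simp
next
  fix a b and q :: "nat \<Rightarrow> nat"
  assume sw: "a \<in> {..<p}" "b \<in> {..<p}" "a \<noteq> b"
    and IH: "\<forall>xs. length xs = p \<longrightarrow> set xs \<subseteq> {..<n} \<longrightarrow> (g (permute_list q xs))\<^sup>2 = (g xs)\<^sup>2"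
    and qp: "q permutes {..<p}"
  show "\<forall>xs. length xs = p \<longrightarrow> set xs \<subseteq> {..<n} \<longrightarrow> (g (permute_list (Transposition.transpose a b \<circ> q) xs))\<^sup>2 = (g xs)\<^sup>2"
  proof (intro allI impI)
    fix xs :: "nat list" assume l: "length xs = p" and s: "set xs \<subseteq> {..<n}"
    have ab: "a < p" "b < p" using sw by auto
    let ?ys = "permute_list (Transposition.transpose a b) xs"
    have "permute_list (Transposition.transpose a b \<circ> q) xs = permute_list q ?ys"
      using qp l by (simp add: permute_list_compose)
    moreover have ys: "?ys = xs[a := xs ! b, b := xs ! a]"
      using ab l by (simp add: permute_list_transpose)
    moreover have "length ?ys = p" using l by simp
    moreover have "set ?ys \<subseteq> {..<n}" unfolding ys using s ab l
      by (metis nth_mem order_trans set_update_subset_insert insert_subset subsetD)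
    ultimately show "(g (permute_list (Transposition.transpose a b \<circ> q) xs))\<^sup>2 = (g xs)\<^sup>2"
      using IH pform_swap_sq[OF assms(1) l s ab] by metis
  qed
qed

lemma pform_sort_sq:
  assumes "p_form n p g" "length xs = p" "set xs \<subseteq> {..<n}" "distinct xs"
  shows "(g (sorted_list_of_set (set xs)))\<^sup>2 = (g xs)\<^sup>2"
proof -
  have e: "sorted_list_of_set (set xs) = sort xs"
    using assms(4) by (simp add: sorted_list_of_set_sort_remdups distinct_remdups_id)
  have "mset (sort xs) = mset xs" by simp
  then obtain q where q: "q permutes {..<length xs}" "permute_list q xs = sort xs"
    by (rule mset_eq_permutation)
  show ?thesis using pform_perm_sq[OF assms(1)] q assms e by metis
qed

lemma pform_dup:
  assumes "p_form n p g" "length xs = p" "set xs \<subseteq> {..<n}" "\<not> distinct xs"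
  shows "g xs = 0"
proof -
  obtain a b where ab: "a < b" "b < length xs" "xs ! a = xs ! b"
    using assms(4) by (metis distinct_conv_nth linorder_neqE_nat)
  then have "g (xs[a := xs ! b, b := xs ! a]) = - g xs" using assms unfolding p_form_def by blast
  moreover have "xs[a := xs ! b, b := xs ! a] = xs" using ab
    by (metis list_update_id)
  ultimately show ?thesis by simp
qed



lemma sum_if_single_sq:
  fixes f :: "nat \<Rightarrow> real"
  assumes "distinct I" "length I = p"
  shows "(\<Sum>a<p. (if I ! a = l \<and> C then f a else 0))\<^sup>2 = (\<Sum>a<p. (if I ! a = l \<and> C then (f a)\<^sup>2 else 0))"
proof -
  let ?A = "{a\<in>{..<p}. I ! a = l \<and> C}"
  have e1: "(\<Sum>a<p. (if I ! a = l \<and> C then f a else 0)) = (\<Sum>a\<in>?A. f a)"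
    by (rule sum.mono_neutral_cong_right) auto
  have e2: "(\<Sum>a<p. (if I ! a = l \<and> C then (f a)\<^sup>2 else 0)) = (\<Sum>a\<in>?A. (f a)\<^sup>2)"
    by (rule sum.mono_neutral_cong_right) auto
  show ?thesis
  proof (cases "?A = {}")
    case True then show ?thesis unfolding e1 e2 by (simp only: True sum.empty power2_eq_square mult_zero_left)
  next
    case False
    then obtain a0 where a0: "a0 \<in> ?A" by blast
    have A0: "?A = {a0}"
    proof
      show "?A \<subseteq> {a0}"
      proof
        fix b assume "b \<in> ?A"
        then have "I ! b = I ! a0" "b < length I" "a0 < length I" using a0 assms by auto
        then show "b \<in> {a0}" using assms(1) by (simp add: nth_eq_iff_index_eq)
      qed
    qed (use a0 in auto)
    show ?thesis unfolding e1 e2 by (simp only: A0) simp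
  qed
qed

lemma sum_pairs_sym:
  fixes h :: "nat \<Rightarrow> nat \<Rightarrow> real"
  shows "(\<Sum>k<n. \<Sum>l<n. if k < l then h k l + h l k else 0) = (\<Sum>k<n. \<Sum>l<n. if k \<noteq> l then h k l else 0)"
proof -
  have "(\<Sum>k<n. \<Sum>l<n. if k < l then h k l + h l k else 0)
      = (\<Sum>k<n. \<Sum>l<n. if k < l then h k l else 0) + (\<Sum>k<n. \<Sum>l<n. if k < l then h l k else 0)"
    by (simp add: sum.distrib[symmetric] if_distrib cong: if_cong)
  also have "(\<Sum>k<n. \<Sum>l<n. if k < l then h l k else 0) = (\<Sum>k<n. \<Sum>l<n. if l < k then h k l else 0)"
    by (rule sum.swap)
  also have "(\<Sum>k<n. \<Sum>l<n. if k < l then h k l else 0) + (\<Sum>k<n. \<Sum>l<n. if l < k then h k l else 0)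
     = (\<Sum>k<n. \<Sum>l<n. if k \<noteq> l then h k l else 0)"
    by (simp add: sum.distrib[symmetric]) (rule sum.cong, simp, rule sum.cong, auto)
  finally show ?thesis .
qed

lemma xi_norm_I:
  assumes pf: "p_form n p g" and dI: "distinct I" and lI: "length I = p" and sI: "set I \<subseteq> {..<n}"
  shows "inner2 n (xi n p g I) (xi n p g I)
     = (\<Sum>l\<in>set I. \<Sum>k\<in>{..<n} - set I. (g (sorted_list_of_set (insert k (set I - {l}))))\<^sup>2)"
proof -
  define S where "S = set I"
  define c where "c k l = (\<Sum>a<p. (if I ! a = l then g (I[a:=k]) else 0))" for k l
  define h where "h k l = (\<Sum>a<p. (if I ! a = l \<and> k \<notin> S then g (I[a:=k]) else 0))" for k l
  have xi_eq: "xi n p g I k l = c k l - c l k" for k l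
    unfolding xi_def wedge_coeffs_def c_def by simp
  have L1: "c k l = h k l" if "k \<noteq> l" "k < n" for k l
    unfolding c_def h_def
  proof (rule sum.cong[OF refl])
    fix a assume a: "a \<in> {..<p}"
    show "(if I ! a = l then g (I[a := k]) else 0) = (if I ! a = l \<and> k \<notin> S then g (I[a := k]) else 0)"
    proof (cases "I ! a = l \<and> k \<in> S")
      case True
      then obtain b where b: "b < length I" "I ! b = k" unfolding S_def by (metis in_set_conv_nth)
      have "b \<noteq> a" using b True that by auto
      have nd: "\<not> distinct (I[a := k])"
      proof
        assume d: "distinct (I[a := k])"
        have e1: "I[a := k] ! a = k" using a lI by simp
        have e2: "I[a := k] ! b = k" using b \<open>b \<noteq> a\<close> by simp
        have "a = b" using nth_eq_iff_index_eq[OF d, of a b] a b lI e1 e2 by simp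
        then show False using \<open>b \<noteq> a\<close> by simp
      qed
      have "set (I[a := k]) \<subseteq> {..<n}" using sI that
        by (meson insert_subset lessThan_iff order_trans set_update_subset_insert)
      then have "g (I[a := k]) = 0" using pform_dup[OF pf _ _ nd] lI by simp
      then show ?thesis by simp
    next
      case False
      show ?thesis
      proof (cases "I ! a = l")
        case T: True
        then have "k \<notin> S" using False by blast
        then show ?thesis using T by (simp only: if_True simp_thms not_False_eq_True)
      next
        case F: False
        then show ?thesis by (simp only: if_False simp_thms)
      qed
    qed
  qed
  have L2: "h k l * h l k = 0" for k l
  proof (cases "h k l = 0")
    case False
    then obtain a where "a \<in> {..<p}" "(if I ! a = l \<and> k \<notin> S then g (I[a:=k]) else 0) \<noteq> 0"
      using sum.not_neutral_contains_not_neutral[OF False[unfolded h_def]] by blast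
    then have "a < p" "I ! a = l" "k \<notin> S" by (auto split: if_splits)
    then have "l \<in> S" unfolding S_def using lI by auto
    then have "h l k = 0" unfolding h_def by simp
    then show ?thesis by simp
  qed simp
  have L3: "h l l = 0" for l
    unfolding h_def S_def using lI by (auto intro!: sum.neutral)
  have "inner2 n (xi n p g I) (xi n p g I) = (\<Sum>k<n. \<Sum>l<n. if k < l then (h k l)\<^sup>2 + (h l k)\<^sup>2 else 0)"
    unfolding inner2_def
  proof (rule sum.cong[OF refl], rule sum.cong[OF refl])
    fix k l assume "k \<in> {..<n}" "l \<in> {..<n}"
    then have kl: "k < n" "l < n" by auto
    show "(if k < l then xi n p g I k l * xi n p g I k l else 0) = (if k < l then (h k l)\<^sup>2 + (h l k)\<^sup>2 else 0)"
    proof (cases "k < l")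
      case True
      then have x: "xi n p g I k l = h k l - h l k" using xi_eq L1 kl by simp
      have "(h k l - h l k) * (h k l - h l k) = h k l * h k l + h l k * h l k - 2 * (h k l * h l k)"
        by (simp add: algebra_simps)
      then show ?thesis using True L2[of k l] unfolding x by (simp add: power2_eq_square)
    qed simp
  qed
  also have "\<dots> = (\<Sum>k<n. \<Sum>l<n. if k \<noteq> l then (h k l)\<^sup>2 else 0)"
    by (rule sum_pairs_sym)
  also have "\<dots> = (\<Sum>k<n. \<Sum>l<n. (h k l)\<^sup>2)"
    using L3 by (intro sum.cong refl) auto
  also have "\<dots> = (\<Sum>k<n. \<Sum>l<n. \<Sum>a<p. (if I ! a = l \<and> k \<notin> S then (g (I[a:=k]))\<^sup>2 else 0))"
    unfolding h_def by (simp add: sum_if_single_sq[OF dI lI])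
  also have "\<dots> = (\<Sum>k<n. \<Sum>a<p. \<Sum>l<n. (if I ! a = l \<and> k \<notin> S then (g (I[a:=k]))\<^sup>2 else 0))"
    by (rule sum.cong[OF refl], rule sum.swap)
  also have "\<dots> = (\<Sum>k<n. \<Sum>a<p. (if k \<notin> S then (g (I[a:=k]))\<^sup>2 else 0))"
  proof (rule sum.cong[OF refl], rule sum.cong[OF refl])
    fix k a assume "a \<in> {..<p}"
    then have "I ! a < n" using sI lI by (meson lessThan_iff nth_mem subsetD)
    then show "(\<Sum>l<n. (if I ! a = l \<and> k \<notin> S then (g (I[a:=k]))\<^sup>2 else 0)) = (if k \<notin> S then (g (I[a:=k]))\<^sup>2 else 0)"
      by (simp add: sum.delta)
  qed
  also have "\<dots> = (\<Sum>a<p. \<Sum>k<n. (if k \<notin> S then (g (I[a:=k]))\<^sup>2 else 0))"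
    by (rule sum.swap)
  also have "\<dots> = (\<Sum>a<p. \<Sum>k\<in>{..<n} - S. (g (I[a:=k]))\<^sup>2)"
    by (rule sum.cong[OF refl], rule sum.mono_neutral_cong_right) auto
  also have "\<dots> = (\<Sum>a<p. \<Sum>k\<in>{..<n} - S. (g (sorted_list_of_set (insert k (S - {I ! a}))))\<^sup>2)"
  proof (rule sum.cong[OF refl], rule sum.cong[OF refl])
    fix a k assume a: "a \<in> {..<p}" and k: "k \<in> {..<n} - S"
    have d: "distinct (I[a := k])" using dI k unfolding S_def by (simp add: distinct_list_update)
    have st: "set (I[a := k]) = insert k (S - {I ! a})" unfolding S_def using dI a lI by (simp add: set_update_distinct)
    have "set (I[a := k]) \<subseteq> {..<n}" using st sI k S_def by auto
    then show "(g (I[a:=k]))\<^sup>2 = (g (sorted_list_of_set (insert k (S - {I ! a}))))\<^sup>2"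
      using pform_sort_sq[OF pf _ _ d] lI st by simp
  qed
  also have "\<dots> = (\<Sum>l\<in>S. \<Sum>k\<in>{..<n} - S. (g (sorted_list_of_set (insert k (S - {l}))))\<^sup>2)"
  proof -
    have inj: "inj_on (nth I) {..<p}" using dI lI by (simp add: inj_on_nth)
    have im: "nth I ` {..<p} = S" unfolding S_def using lI by (auto simp: in_set_conv_nth)
    show ?thesis using sum.reindex[OF inj, of "\<lambda>l. \<Sum>k\<in>{..<n} - S. (g (sorted_list_of_set (insert k (S - {l}))))\<^sup>2"]
      unfolding im by simp
  qed
  finally show ?thesis unfolding S_def .
qed



lemma incr_sum_sets:
  "(\<Sum>I\<in>incr_indices n p. f I) = (\<Sum>S\<in>{S. S \<subseteq> {..<n} \<and> card S = p}. f (sorted_list_of_set S))"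
proof -
  let ?Sets = "{S. S \<subseteq> {..<n} \<and> card S = p}"
  have inj: "inj_on sorted_list_of_set ?Sets"
  proof (rule inj_onI)
    fix A B assume "A \<in> ?Sets" "B \<in> ?Sets" "sorted_list_of_set A = sorted_list_of_set B"
    then show "A = B" by (metis (no_types, lifting) finite_lessThan finite_subset mem_Collect_eq set_sorted_list_of_set)
  qed
  have im: "sorted_list_of_set ` ?Sets = incr_indices n p"
  proof
    show "sorted_list_of_set ` ?Sets \<subseteq> incr_indices n p"
    proof
      fix I assume "I \<in> sorted_list_of_set ` ?Sets"
      then obtain S where S: "S \<in> ?Sets" "I = sorted_list_of_set S" by blast
      then have f: "finite S" using finite_subset by blast
      show "I \<in> incr_indices n p" unfolding incr_indices_def using S f by auto
    qed
  next
    show "incr_indices n p \<subseteq> sorted_list_of_set ` ?Sets"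
    proof
      fix I assume "I \<in> incr_indices n p"
      then have I: "length I = p" "sorted_wrt (<) I" "set I \<subseteq> {..<n}" unfolding incr_indices_def by auto
      then have d: "distinct I" by (simp add: strict_sorted_iff)
      have "sorted_list_of_set (set I) = I" using I d by (simp add: strict_sorted_iff sorted_list_of_set.idem_if_sorted_distinct)
      moreover have "set I \<in> ?Sets" using I d by (simp add: distinct_card)
      ultimately show "I \<in> sorted_list_of_set ` ?Sets" by (metis image_eqI)
    qed
  qed
  show ?thesis using sum.reindex[OF inj, of f] unfolding im by simp
qed

lemma count_swap:
  fixes G :: "nat set \<Rightarrow> real"
  assumes "p \<le> n"
  shows "(\<Sum>S\<in>{S. S \<subseteq> {..<n} \<and> card S = p}. \<Sum>l\<in>S. \<Sum>k\<in>{..<n} - S. G (insert k (S - {l})))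
       = real (p * (n - p)) * (\<Sum>S\<in>{S. S \<subseteq> {..<n} \<and> card S = p}. G S)"
proof -
  define Sets where "Sets = {S. S \<subseteq> {..<n} \<and> card S = p}"
  define X where "X = Sigma Sets (\<lambda>S. S \<times> ({..<n} - S))"
  define \<phi> where "\<phi> = (\<lambda>(S::nat set, (l::nat, k::nat)). (insert k (S - {l}), (k, l)))"
  have finSets: "finite Sets" unfolding Sets_def by (rule finite_subset[of _ "Pow {..<n}"]) auto
  have finS: "S \<in> Sets \<Longrightarrow> finite S" for S unfolding Sets_def using finite_subset by blast
  have e1: "(\<Sum>S\<in>Sets. \<Sum>l\<in>S. \<Sum>k\<in>{..<n} - S. F S l k) = (\<Sum>x\<in>X. F (fst x) (fst (snd x)) (snd (snd x)))" for F
  proof -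
    have "(\<Sum>S\<in>Sets. \<Sum>l\<in>S. \<Sum>k\<in>{..<n} - S. F S l k) = (\<Sum>S\<in>Sets. \<Sum>x\<in>S \<times> ({..<n} - S). F S (fst x) (snd x))"
      by (rule sum.cong[OF refl]) (simp add: sum.cartesian_product finS case_prod_beta)
    also have "\<dots> = (\<Sum>x\<in>X. F (fst x) (fst (snd x)) (snd (snd x)))"
      unfolding X_def using finSets finS by (subst sum.Sigma) (auto intro: finite_cartesian_product simp: case_prod_beta)
    finally show ?thesis .
  qed
  have inX: "\<phi> x \<in> X" and inv: "\<phi> (\<phi> x) = x" if "x \<in> X" for x
  proof -
    obtain S l k where x: "x = (S, (l, k))" by (cases x) auto
    have S: "S \<subseteq> {..<n}" "card S = p" "l \<in> S" "k < n" "k \<notin> S" using that x unfolding X_def Sets_def by auto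
    have f: "finite S" using S finite_subset by blast
    have "l \<noteq> k" using S by auto
    have "p > 0" using S f card_gt_0_iff by blast
    then have c: "card (insert k (S - {l})) = p" using S f by (simp add: card_Diff_singleton)
    show "\<phi> x \<in> X" unfolding x \<phi>_def X_def Sets_def using S c \<open>l \<noteq> k\<close> by auto
    show "\<phi> (\<phi> x) = x" unfolding x \<phi>_def using S \<open>l \<noteq> k\<close> by auto
  qed
  have "(\<Sum>x\<in>X. G (fst (\<phi> x))) = (\<Sum>x\<in>X. G (fst x))"
    by (rule sum.reindex_bij_witness[where i=\<phi> and j=\<phi>]) (auto simp: inX inv)
  moreover have "(\<Sum>S\<in>Sets. \<Sum>l\<in>S. \<Sum>k\<in>{..<n} - S. G (insert k (S - {l}))) = (\<Sum>x\<in>X. G (fst (\<phi> x)))"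
    using e1[of "\<lambda>S l k. G (insert k (S - {l}))"] unfolding \<phi>_def by (simp add: case_prod_beta)
  moreover have "(\<Sum>x\<in>X. G (fst x)) = (\<Sum>S\<in>Sets. \<Sum>l\<in>S. \<Sum>k\<in>{..<n} - S. G S)"
    using e1[of "\<lambda>S l k. G S"] by simp
  moreover have "(\<Sum>S\<in>Sets. \<Sum>l\<in>S. \<Sum>k\<in>{..<n} - S. G S) = (\<Sum>S\<in>Sets. real (p * (n - p)) * G S)"
  proof (rule sum.cong[OF refl])
    fix S assume "S \<in> Sets"
    then have "card S = p" "S \<subseteq> {..<n}" unfolding Sets_def by auto
    then have "card ({..<n} - S) = n - p" by (simp add: card_Diff_subset finite_subset)
    then show "(\<Sum>l\<in>S. \<Sum>k\<in>{..<n} - S. G S) = real (p * (n - p)) * G S"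
      using \<open>card S = p\<close> by simp
  qed
  ultimately show ?thesis unfolding Sets_def by (simp add: sum_distrib_left)
qed

lemma norm_identity:
  assumes pf: "p_form n p g" and pn: "p \<le> n"
  shows "(\<Sum>I\<in>incr_indices n p. inner2 n (xi n p g I) (xi n p g I)) = real (p * (n - p)) * form_norm_sq n p g"
proof -
  let ?Sets = "{S. S \<subseteq> {..<n} \<and> card S = p}"
  let ?G = "\<lambda>T. (g (sorted_list_of_set T))\<^sup>2"
  have "(\<Sum>I\<in>incr_indices n p. inner2 n (xi n p g I) (xi n p g I))
      = (\<Sum>S\<in>?Sets. inner2 n (xi n p g (sorted_list_of_set S)) (xi n p g (sorted_list_of_set S)))"
    by (rule incr_sum_sets)
  also have "\<dots> = (\<Sum>S\<in>?Sets. \<Sum>l\<in>S. \<Sum>k\<in>{..<n} - S. ?G (insert k (S - {l})))"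
  proof (rule sum.cong[OF refl])
    fix S assume S: "S \<in> ?Sets"
    then have f: "finite S" using finite_subset by blast
    have st: "set (sorted_list_of_set S) = S" using f by simp
    show "inner2 n (xi n p g (sorted_list_of_set S)) (xi n p g (sorted_list_of_set S))
        = (\<Sum>l\<in>S. \<Sum>k\<in>{..<n} - S. ?G (insert k (S - {l})))"
      using xi_norm_I[OF pf, of "sorted_list_of_set S"] S f unfolding st by simp
  qed
  also have "\<dots> = real (p * (n - p)) * (\<Sum>S\<in>?Sets. ?G S)"
    by (rule count_swap[OF pn])
  also have "(\<Sum>S\<in>?Sets. ?G S) = form_norm_sq n p g"
    unfolding form_norm_sq_def by (rule incr_sum_sets[symmetric])
  finally show ?thesis .
qed



lemma cont_coord [continuous_intros]: "continuous_on S (\<lambda>x::'a \<Rightarrow> real. x i)"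
  by (rule continuous_on_subset[OF continuous_on_product_coordinates]) auto

lemma quad_cross:
  fixes A :: "'a \<Rightarrow> 'a \<Rightarrow> real"
  assumes sym: "\<And>p q. p \<in> J \<Longrightarrow> q \<in> J \<Longrightarrow> A p q = A q p"
  shows "(\<Sum>p\<in>J. (\<Sum>q\<in>J. A p q * u q) * v p) = (\<Sum>p\<in>J. (\<Sum>q\<in>J. A p q * v q) * u p)"
proof -
  have "(\<Sum>p\<in>J. (\<Sum>q\<in>J. A p q * u q) * v p) = (\<Sum>p\<in>J. \<Sum>q\<in>J. A p q * u q * v p)"
    by (simp add: sum_distrib_right)
  also have "\<dots> = (\<Sum>q\<in>J. \<Sum>p\<in>J. A p q * u q * v p)" by (rule sum.swap)
  also have "\<dots> = (\<Sum>q\<in>J. \<Sum>p\<in>J. A q p * v p * u q)"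
    by (intro sum.cong refl) (simp add: sym)
  also have "\<dots> = (\<Sum>p\<in>J. (\<Sum>q\<in>J. A p q * v q) * u p)"
    by (simp add: sum_distrib_right)
  finally show ?thesis .
qed

lemma rayleigh_min:
  fixes J :: "'a set" and A :: "'a \<Rightarrow> 'a \<Rightarrow> real"
  assumes fin: "finite J" and ne: "J \<noteq> {}" and sym: "\<And>p q. p \<in> J \<Longrightarrow> q \<in> J \<Longrightarrow> A p q = A q p"
  shows "\<exists>v \<mu>. (\<exists>j\<in>J. v j \<noteq> 0) \<and> (\<forall>p\<in>J. (\<Sum>q\<in>J. A p q * v q) = \<mu> * v p)
     \<and> (\<forall>w. \<mu> * (\<Sum>p\<in>J. (w p)\<^sup>2) \<le> (\<Sum>p\<in>J. (\<Sum>q\<in>J. A p q * w q) * w p))"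
proof -
  define Q where "Q w = (\<Sum>p\<in>J. (\<Sum>q\<in>J. A p q * w q) * w p)" for w :: "'a \<Rightarrow> real"
  define N where "N w = (\<Sum>p\<in>J. (w p)\<^sup>2)" for w :: "'a \<Rightarrow> real"
  define Sph where "Sph = {w. (\<forall>i. i \<notin> J \<longrightarrow> w i = 0) \<and> N w = 1}"
  define K where "K = PiE UNIV (\<lambda>i. if i \<in> J then {-1..1::real} else {0})"
  have "compactin (product_topology (\<lambda>i. euclideanreal) UNIV) K"
    unfolding K_def by (subst compactin_PiE) (auto simp: compactin_euclidean_iff)
  then have cK: "compact K" by (simp add: euclidean_product_topology compactin_euclidean_iff)
  have sub: "Sph \<subseteq> K"
  proof
    fix w assume w: "w \<in> Sph"
    have "w i \<in> (if i \<in> J then {-1..1} else {0})" for i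
    proof (cases "i \<in> J")
      case True
      have "(w i)\<^sup>2 \<le> N w" unfolding N_def using True fin by (intro member_le_sum) auto
      then have "(w i)\<^sup>2 \<le> 1" using w unfolding Sph_def by simp
      then have "\<bar>w i\<bar> \<le> 1" by (simp add: abs_square_le_1)
      then show ?thesis using True by auto
    qed (use w Sph_def in auto)
    then show "w \<in> K" unfolding K_def by auto
  qed
  have cl: "closed Sph"
  proof -
    have "Sph = {w. \<forall>i. i \<notin> J \<longrightarrow> w i = 0} \<inter> {w. N w = 1}" unfolding Sph_def by auto
    moreover have "closed {w::'a\<Rightarrow>real. \<forall>i. i \<notin> J \<longrightarrow> w i = 0}"
      by (intro closed_Collect_all closed_Collect_imp closed_Collect_eq closed_Collect_const open_Collect_const continuous_intros)
    moreover have "closed {w. N w = 1}"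
      unfolding N_def by (intro closed_Collect_eq continuous_intros)
    ultimately show ?thesis by auto
  qed
  have cS: "compact Sph"
  proof -
    have "Sph = K \<inter> Sph" using sub by auto
    then show ?thesis using cK cl by (metis compact_Int_closed)
  qed
  obtain j where j: "j \<in> J" using ne by auto
  have neS: "Sph \<noteq> {}"
  proof -
    have "(\<lambda>i. if i = j then 1 else 0) \<in> Sph" unfolding Sph_def N_def using j fin
      by (auto simp: if_distrib[of "\<lambda>x. x\<^sup>2"] cong: if_cong)
    then show ?thesis by auto
  qed
  have cQ: "continuous_on Sph Q" unfolding Q_def by (intro continuous_intros)
  obtain v where vS: "v \<in> Sph" and vmin: "\<And>y. y \<in> Sph \<Longrightarrow> Q v \<le> Q y"
    using continuous_attains_inf[OF cS neS cQ] by blast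
  define \<mu> where "\<mu> = Q v"
  have Nv: "N v = 1" using vS unfolding Sph_def by simp
  have Q_scale: "Q (\<lambda>i. c * w i) = c\<^sup>2 * Q w" for c w
    unfolding Q_def by (simp add: sum_distrib_left power2_eq_square algebra_simps)
  have N_scale: "N (\<lambda>i. c * w i) = c\<^sup>2 * N w" for c w
    unfolding N_def by (simp add: sum_distrib_left power2_eq_square algebra_simps)
  have Q_cong: "Q w = Q w'" if "\<And>i. i \<in> J \<Longrightarrow> w i = w' i" for w w'
    unfolding Q_def using that by (intro sum.cong refl) (auto intro!: sum.cong)
  have N_cong: "N w = N w'" if "\<And>i. i \<in> J \<Longrightarrow> w i = w' i" for w w'
    unfolding N_def using that by (intro sum.cong refl) auto
  have Nnn: "N w \<ge> 0" for w unfolding N_def by (intro sum_nonneg) auto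
  have bound: "\<mu> * N w \<le> Q w" for w
  proof (cases "N w = 0")
    case True
    then have "\<forall>p\<in>J. (w p)\<^sup>2 = 0" unfolding N_def using fin by (subst sum_nonneg_eq_0_iff[symmetric]) auto
    then have "Q w = 0" unfolding Q_def by simp
    then show ?thesis using True by simp
  next
    case False
    then have Np: "N w > 0" using Nnn[of w] by simp
    define s where "s = sqrt (N w)"
    have sp: "s > 0" unfolding s_def using Np by simp
    have s2: "s\<^sup>2 = N w" unfolding s_def using Np by simp
    define w' where "w' i = (if i \<in> J then (1/s) * w i else 0)" for i
    have "N w' = N (\<lambda>i. (1/s) * w i)" by (rule N_cong) (simp add: w'_def)
    also have "\<dots> = 1" using s2 sp Np unfolding N_scale by (simp add: power_divide)
    finally have "w' \<in> Sph" unfolding Sph_def w'_def by simp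
    then have "\<mu> \<le> Q w'" unfolding \<mu>_def by (rule vmin)
    also have "Q w' = Q (\<lambda>i. (1/s) * w i)" by (rule Q_cong) (simp add: w'_def)
    also have "\<dots> = Q w / N w" using s2 Np unfolding Q_scale by (simp add: power_divide)
    finally show ?thesis using Np by (simp add: pos_le_divide_eq)
  qed
  define u where "u p = (\<Sum>q\<in>J. A p q * v q) - \<mu> * v p" for p
  define B where "B w = Q w - \<mu> * N w" for w
  have Bnn: "B w \<ge> 0" for w unfolding B_def using bound[of w] by simp
  have Bv: "B v = 0" unfolding B_def \<mu>_def using Nv by simp
  have expQ: "Q (\<lambda>i. v i + t * u i) = Q v + 2 * t * (\<Sum>p\<in>J. (\<Sum>q\<in>J. A p q * v q) * u p) + t\<^sup>2 * Q u" for t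
  proof -
    have "Q (\<lambda>i. v i + t * u i) = Q v + t * (\<Sum>p\<in>J. (\<Sum>q\<in>J. A p q * v q) * u p)
        + t * (\<Sum>p\<in>J. (\<Sum>q\<in>J. A p q * u q) * v p) + t\<^sup>2 * Q u"
      unfolding Q_def
      by (simp add: algebra_simps sum.distrib sum_distrib_left power2_eq_square)
    then show ?thesis using quad_cross[of J A u v, OF sym] by simp
  qed
  have expN: "N (\<lambda>i. v i + t * u i) = N v + 2 * t * (\<Sum>p\<in>J. v p * u p) + t\<^sup>2 * N u" for t
    unfolding N_def by (simp add: algebra_simps sum.distrib sum_distrib_left power2_eq_square)
  define c where "c = N u"
  have cross: "(\<Sum>p\<in>J. (\<Sum>q\<in>J. A p q * v q) * u p) - \<mu> * (\<Sum>p\<in>J. v p * u p) = c"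
    unfolding c_def N_def u_def by (simp add: sum_distrib_left sum_subtractf[symmetric] power2_eq_square algebra_simps)
  have expB: "B (\<lambda>i. v i + t * u i) = 2 * t * c + t\<^sup>2 * B u" for t
  proof -
    have "B (\<lambda>i. v i + t * u i) = B v + 2 * t * ((\<Sum>p\<in>J. (\<Sum>q\<in>J. A p q * v q) * u p) - \<mu> * (\<Sum>p\<in>J. v p * u p)) + t\<^sup>2 * B u"
      unfolding B_def expQ expN by (simp add: algebra_simps)
    then show ?thesis using Bv cross by simp
  qed
  have c0: "c = 0"
  proof (rule ccontr)
    assume "c \<noteq> 0"
    then have cp: "c > 0" using Nnn[of u] unfolding c_def by simp
    define d where "d = B u + 1"
    have dp: "d \<ge> 1" unfolding d_def using Bnn[of u] by simp
    define t where "t = - c / d"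
    have "2 * t * c + t\<^sup>2 * B u = - (c\<^sup>2 * (d + 1)) / d\<^sup>2"
    proof -
      have Bu: "B u = d - 1" unfolding d_def by simp
      show ?thesis unfolding t_def Bu using dp by (simp add: field_simps power2_eq_square)
    qed
    also have "\<dots> < 0" using cp dp by (intro divide_neg_pos) auto
    finally show False using Bnn[of "\<lambda>i. v i + t * u i"] expB[of t] by simp
  qed
  have eig: "\<forall>p\<in>J. (\<Sum>q\<in>J. A p q * v q) = \<mu> * v p"
  proof
    fix p assume p: "p \<in> J"
    have "\<forall>p\<in>J. (u p)\<^sup>2 = 0" using c0 unfolding c_def N_def using fin
      by (subst sum_nonneg_eq_0_iff[symmetric]) auto
    then have "u p = 0" using p by simp
    then show "(\<Sum>q\<in>J. A p q * v q) = \<mu> * v p" unfolding u_def by simp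
  qed
  have nz: "\<exists>j\<in>J. v j \<noteq> 0"
  proof (rule ccontr)
    assume "\<not> ?thesis"
    then have "N v = 0" unfolding N_def by simp
    then show False using Nv by simp
  qed
  show ?thesis using nz eig bound unfolding N_def Q_def by blast
qed



lemma sum_div_mod:
  fixes n :: nat
  shows "(\<Sum>c<n*n. f (c div n) (c mod n)) = (\<Sum>i<n. \<Sum>j<n. f i j :: 'b::comm_monoid_add)"
proof -
  have "(\<Sum>c<n*n. f (c div n) (c mod n)) = (\<Sum>x\<in>{..<n}\<times>{..<n}. f (fst x) (snd x))"
  proof (rule sum.reindex_bij_witness[where i = "\<lambda>x. fst x * n + snd x" and j = "\<lambda>c. (c div n, c mod n)"], goal_cases)
    case (1 a) then show ?case by simp
  next
    case (2 a)
    then have "n > 0" by (cases n) auto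
    then show ?case using 2 by (auto simp: less_mult_imp_div_less)
  next
    case (3 b) then show ?case by (cases b) auto
  next
    case (4 b)
    have "fst b * n + snd b < fst b * n + n" using 4 by auto
    also have "\<dots> = (fst b + 1) * n" by simp
    also have "\<dots> \<le> n * n" using 4 by (intro mult_right_mono) auto
    finally show ?case by simp
  next
    case (5 a) then show ?case by simp
  qed
  also have "\<dots> = (\<Sum>i<n. \<Sum>j<n. f i j)" by (simp add: sum.cartesian_product case_prod_beta)
  finally show ?thesis .
qed

lemma curv_op_as_sum:
  "curv_op n R a k l = (\<Sum>i<n. \<Sum>j<n. (if i < j then R i j l k - R i j k l else 0) * a i j)"
  unfolding curv_op_def wedge_coeffs_def
  by (auto simp: sum_subtractf[symmetric] algebra_simps intro!: sum.cong)

lemma finite_curv_eigenvalues: "finite (curv_eigenvalues n R)"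
proof -
  define F where "F k l i j = (if i < j then R i j l k - R i j k l else 0)" for k l i j
  define Bm :: "real mat" where "Bm = mat (n*n) (n*n) (\<lambda>(r,c). F (r div n) (r mod n) (c div n) (c mod n))"
  have Bc: "Bm \<in> carrier_mat (n*n) (n*n)" unfolding Bm_def by simp
  have sub: "curv_eigenvalues n R \<subseteq> {x. poly (char_poly Bm) x = 0}"
  proof
    fix \<mu> assume "\<mu> \<in> curv_eigenvalues n R"
    then obtain a where a2: "two_form n a" and nz: "\<exists>k<n. \<exists>l<n. k < l \<and> a k l \<noteq> 0"
      and eq: "\<forall>k<n. \<forall>l<n. curv_op n R a k l = \<mu> * a k l"
      unfolding curv_eigenvalues_def by blast
    define w where "w = vec (n*n) (\<lambda>r. a (r div n) (r mod n))"
    have wc: "w \<in> carrier_vec (n*n)" unfolding w_def by simp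
    obtain k l where kl: "k < n" "l < n" "a k l \<noteq> 0" using nz by blast
    have "k * n + l < n * n"
    proof -
      have "k * n + l < k * n + n" using kl by simp
      also have "\<dots> \<le> n * n" using kl by (metis add.commute mult_Suc less_eq_Suc_le mult_le_mono1)
      finally show ?thesis .
    qed
    moreover have "w $ (k * n + l) = a k l" unfolding w_def using kl calculation by simp
    ultimately have wnz: "w \<noteq> 0\<^sub>v (n*n)" using kl by auto
    have "Bm *\<^sub>v w = \<mu> \<cdot>\<^sub>v w"
    proof (rule eq_vecI)
      show "dim_vec (Bm *\<^sub>v w) = dim_vec (\<mu> \<cdot>\<^sub>v w)" using Bc wc by simp
    next
      fix r assume "r < dim_vec (\<mu> \<cdot>\<^sub>v w)"
      then have r: "r < n * n" using wc by simp
      then have n0: "n > 0" by (cases n) auto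
      have rn: "r div n < n" "r mod n < n" using r n0 by (auto simp: less_mult_imp_div_less)
      have "(Bm *\<^sub>v w) $ r = (\<Sum>c<n*n. F (r div n) (r mod n) (c div n) (c mod n) * a (c div n) (c mod n))"
        using r Bc wc unfolding Bm_def w_def by (simp add: scalar_prod_def lessThan_atLeast0)
      also have "\<dots> = (\<Sum>i<n. \<Sum>j<n. F (r div n) (r mod n) i j * a i j)"
        by (rule sum_div_mod)
      also have "\<dots> = curv_op n R a (r div n) (r mod n)"
        unfolding curv_op_as_sum F_def by simp
      also have "\<dots> = \<mu> * a (r div n) (r mod n)" using eq rn by simp
      also have "\<dots> = (\<mu> \<cdot>\<^sub>v w) $ r" using r unfolding w_def by simp
      finally show "(Bm *\<^sub>v w) $ r = (\<mu> \<cdot>\<^sub>v w) $ r" .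
    qed
    then have "eigenvector Bm w \<mu>" unfolding eigenvector_def using wc wnz Bc by simp
    then have "eigenvalue Bm \<mu>" unfolding eigenvalue_def by blast
    then show "\<mu> \<in> {x. poly (char_poly Bm) x = 0}" using eigenvalue_root_char_poly[OF Bc] by simp
  qed
  have "char_poly Bm \<noteq> 0" using degree_monic_char_poly[OF Bc] by auto
  then show ?thesis using poly_roots_finite finite_subset[OF sub] by blast
qed



lemma rayleigh_max:
  fixes J :: "'a set" and A :: "'a \<Rightarrow> 'a \<Rightarrow> real"
  assumes fin: "finite J" and ne: "J \<noteq> {}" and sym: "\<And>p q. p \<in> J \<Longrightarrow> q \<in> J \<Longrightarrow> A p q = A q p"
  shows "\<exists>v \<mu>. (\<exists>j\<in>J. v j \<noteq> 0) \<and> (\<forall>p\<in>J. (\<Sum>q\<in>J. A p q * v q) = \<mu> * v p)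
     \<and> (\<forall>w. (\<Sum>p\<in>J. (\<Sum>q\<in>J. A p q * w q) * w p) \<le> \<mu> * (\<Sum>p\<in>J. (w p)\<^sup>2))"
proof -
  obtain v \<mu> where v: "\<exists>j\<in>J. v j \<noteq> 0" and e: "\<forall>p\<in>J. (\<Sum>q\<in>J. - A p q * v q) = \<mu> * v p"
    and b: "\<forall>w. \<mu> * (\<Sum>p\<in>J. (w p)\<^sup>2) \<le> (\<Sum>p\<in>J. (\<Sum>q\<in>J. - A p q * w q) * w p)"
    using rayleigh_min[OF fin ne, of "\<lambda>p q. - A p q"] sym by force
  have e': "\<forall>p\<in>J. (\<Sum>q\<in>J. A p q * v q) = (- \<mu>) * v p"
  proof
    fix p assume "p \<in> J"
    then have "(\<Sum>q\<in>J. - A p q * v q) = \<mu> * v p" using e by blast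
    then show "(\<Sum>q\<in>J. A p q * v q) = (- \<mu>) * v p" by (simp add: sum_negf)
  qed
  have b': "\<forall>w. (\<Sum>p\<in>J. (\<Sum>q\<in>J. A p q * w q) * w p) \<le> (- \<mu>) * (\<Sum>p\<in>J. (w p)\<^sup>2)"
  proof
    fix w
    have "\<mu> * (\<Sum>p\<in>J. (w p)\<^sup>2) \<le> (\<Sum>p\<in>J. (\<Sum>q\<in>J. - A p q * w q) * w p)" using b by blast
    also have "\<dots> = - (\<Sum>p\<in>J. (\<Sum>q\<in>J. A p q * w q) * w p)" by (simp add: sum_negf)
    finally show "(\<Sum>p\<in>J. (\<Sum>q\<in>J. A p q * w q) * w p) \<le> (- \<mu>) * (\<Sum>p\<in>J. (w p)\<^sup>2)" by simp
  qed
  show ?thesis using v e' b' by blast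
qed

definition PP :: "nat \<Rightarrow> (nat \<times> nat) set" where
  "PP n = {x \<in> {..<n} \<times> {..<n}. fst x < snd x}"

definition AA :: "(nat \<Rightarrow> nat \<Rightarrow> nat \<Rightarrow> nat \<Rightarrow> real) \<Rightarrow> nat \<times> nat \<Rightarrow> nat \<times> nat \<Rightarrow> real" where
  "AA R x y = R (fst y) (snd y) (snd x) (fst x) - R (fst y) (snd y) (fst x) (snd x)"

lemma finite_PP: "finite (PP n)" unfolding PP_def by auto

lemma pairsum: "(\<Sum>k<n. \<Sum>l<n. if k < l then f k l else 0) = (\<Sum>x\<in>PP n. f (fst x) (snd x))"
proof -
  have "(\<Sum>k<n. \<Sum>l<n. if k < l then f k l else 0) = (\<Sum>x\<in>{..<n}\<times>{..<n}. if fst x < snd x then f (fst x) (snd x) else 0)"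
    by (simp add: sum.cartesian_product case_prod_beta)
  also have "\<dots> = (\<Sum>x\<in>PP n. f (fst x) (snd x))"
    unfolding PP_def by (simp add: sum.inter_filter)
  finally show ?thesis .
qed

lemma curv_op_PP: "curv_op n R a k l = (\<Sum>y\<in>PP n. AA R (k, l) y * a (fst y) (snd y))"
proof -
  have "curv_op n R a k l = (\<Sum>i<n. \<Sum>j<n. if i < j then (R i j l k - R i j k l) * a i j else 0)"
    unfolding curv_op_as_sum by (intro sum.cong refl) auto
  also have "\<dots> = (\<Sum>y\<in>PP n. AA R (k, l) y * a (fst y) (snd y))"
    unfolding pairsum AA_def by simp
  finally show ?thesis .
qed

lemma inner2_PP: "inner2 n a b = (\<Sum>x\<in>PP n. a (fst x) (snd x) * b (fst x) (snd x))"
  unfolding inner2_def by (rule pairsum)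

lemma AA_sym:
  assumes "curvature_tensor n R" "x \<in> PP n" "y \<in> PP n"
  shows "AA R x y = AA R y x"
proof -
  obtain k l where x: "x = (k, l)" "k < n" "l < n" using assms(2) unfolding PP_def by auto
  obtain i j where y: "y = (i, j)" "i < n" "j < n" using assms(3) unfolding PP_def by auto
  have c: "\<And>a b c d. a < n \<Longrightarrow> b < n \<Longrightarrow> c < n \<Longrightarrow> d < n \<Longrightarrow>
     R a b c d = - R b a c d \<and> R a b c d = - R a b d c \<and> R a b c d = R c d a b"
    using assms(1) unfolding curvature_tensor_def by blast
  have "R i j l k = R k l j i"
  proof -
    have "R i j l k = R l k i j" using c[of i j l k] x y by blast
    also have "\<dots> = - R k l i j" using c[of l k i j] x y by blast
    also have "R k l i j = - R k l j i" using c[of k l i j] x y by blast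
    finally show ?thesis by simp
  qed
  moreover have "R i j k l = R k l i j" using c[of i j k l] x y by blast
  ultimately show ?thesis unfolding AA_def x y by simp
qed

lemma eig_in:
  assumes nz: "\<exists>j\<in>PP n. v j \<noteq> 0" and eig: "\<forall>x\<in>PP n. (\<Sum>y\<in>PP n. AA R x y * v y) = \<mu> * v x"
  shows "\<mu> \<in> curv_eigenvalues n R"
proof -
  define a where "a k l = (if k < l then v (k, l) else if l < k then - v (l, k) else 0)" for k l
  have tf: "two_form n a" unfolding two_form_def a_def by auto
  obtain j where j: "j \<in> PP n" "v j \<noteq> 0" using nz by blast
  have nz': "\<exists>k<n. \<exists>l<n. k < l \<and> a k l \<noteq> 0"
    using j unfolding PP_def a_def by (cases j) auto
  have cv: "curv_op n R a k l = (\<Sum>y\<in>PP n. AA R (k, l) y * v y)" for k l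
    unfolding curv_op_PP
    by (intro sum.cong refl) (auto simp: a_def PP_def)
  have anti: "curv_op n R a k l = - curv_op n R a l k" for k l
    unfolding curv_op_def wedge_coeffs_def by simp
  have "curv_op n R a k l = \<mu> * a k l" if kl: "k < n" "l < n" for k l
  proof (cases "k < l")
    case True
    then have "(k, l) \<in> PP n" using kl unfolding PP_def by auto
    then show ?thesis unfolding cv using eig True by (simp add: a_def)
  next
    case False
    show ?thesis
    proof (cases "l < k")
      case True
      then have "(l, k) \<in> PP n" using kl unfolding PP_def by auto
      then have "curv_op n R a l k = \<mu> * v (l, k)" unfolding cv using eig by simp
      then show ?thesis using anti[of k l] True False by (simp add: a_def)
    next
      case False
      then have "k = l" using \<open>\<not> k < l\<close> by simp
      then show ?thesis using anti[of k l] by (simp add: a_def)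
    qed
  qed
  then show ?thesis unfolding curv_eigenvalues_def using tf nz' by blast
qed



theorem lemma7p4:
  fixes n p :: nat and R :: "nat \<Rightarrow> nat \<Rightarrow> nat \<Rightarrow> nat \<Rightarrow> real" and g :: "nat list \<Rightarrow> real"
  assumes "curvature_tensor n R"
    and "1 \<le> p" and "p \<le> n"
    and "p_form n p g"
  shows "real (p * (n - p)) * lambda_R n R * form_norm_sq n p g
           \<le> (\<Sum>I\<in>incr_indices n p. inner2 n (curv_op n R (xi n p g I)) (xi n p g I))
       \<and> (\<Sum>I\<in>incr_indices n p. inner2 n (curv_op n R (xi n p g I)) (xi n p g I))
           \<le> real (p * (n - p)) * Lambda_R n R * form_norm_sq n p g"
proof (cases "n \<le> 1")
  case True
  then have "p = n" using assms by simp
  moreover have "inner2 n a b = 0" for a b using True unfolding inner2_def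
    by (cases n) auto
  ultimately show ?thesis by simp
next
  case False
  then have n2: "n \<ge> 2" by simp
  let ?P = "PP n"
  let ?A = "AA R"
  have fin: "finite ?P" by (rule finite_PP)
  have ne: "?P \<noteq> {}" using n2 unfolding PP_def by (intro ex_in_conv[THEN iffD1] exI[of _ "(0,1)"]) auto
  have sym: "\<And>x y. x \<in> ?P \<Longrightarrow> y \<in> ?P \<Longrightarrow> ?A x y = ?A y x" using AA_sym[OF assms(1)] by blast
  define Q where "Q b = (\<Sum>x\<in>?P. (\<Sum>y\<in>?P. ?A x y * b y) * b x)" for b :: "nat \<times> nat \<Rightarrow> real"
  define N where "N b = (\<Sum>x\<in>?P. (b x)\<^sup>2)" for b :: "nat \<times> nat \<Rightarrow> real"
  have QI: "inner2 n (curv_op n R a) a = Q (\<lambda>x. a (fst x) (snd x))" for a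
    unfolding inner2_PP curv_op_PP Q_def by simp
  have NI: "inner2 n a a = N (\<lambda>x. a (fst x) (snd x))" for a
    unfolding inner2_PP N_def by (simp add: power2_eq_square)
  define S where "S = (\<Sum>I\<in>incr_indices n p. inner2 n (curv_op n R (xi n p g I)) (xi n p g I))"
  define M where "M = real (p * (n - p)) * form_norm_sq n p g"
  have M: "(\<Sum>I\<in>incr_indices n p. inner2 n (xi n p g I) (xi n p g I)) = M"
    unfolding M_def by (rule norm_identity[OF assms(4,3)])
  have Mnn: "M \<ge> 0" unfolding M_def form_norm_sq_def by (intro mult_nonneg_nonneg sum_nonneg) auto
  have finE: "finite (curv_eigenvalues n R)" by (rule finite_curv_eigenvalues)
  obtain v0 \<mu>0 where v0: "\<exists>j\<in>?P. v0 j \<noteq> 0" and e0: "\<forall>x\<in>?P. (\<Sum>y\<in>?P. ?A x y * v0 y) = \<mu>0 * v0 x"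
    and b0: "\<forall>w. \<mu>0 * N w \<le> Q w"
    using rayleigh_min[where A="AA R", OF fin ne sym] unfolding Q_def N_def by blast
  obtain v1 \<mu>1 where v1: "\<exists>j\<in>?P. v1 j \<noteq> 0" and e1: "\<forall>x\<in>?P. (\<Sum>y\<in>?P. ?A x y * v1 y) = \<mu>1 * v1 x"
    and b1: "\<forall>w. Q w \<le> \<mu>1 * N w"
    using rayleigh_max[where A="AA R", OF fin ne sym] unfolding Q_def N_def by blast
  have m0: "\<mu>0 \<in> curv_eigenvalues n R" by (rule eig_in[OF v0 e0])
  have m1: "\<mu>1 \<in> curv_eigenvalues n R" by (rule eig_in[OF v1 e1])
  have l0: "lambda_R n R \<le> \<mu>0" unfolding lambda_R_def using finE m0 by simp
  have l1: "\<mu>1 \<le> Lambda_R n R" unfolding Lambda_R_def using finE m1 by simp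
  have low: "\<mu>0 * M \<le> S"
  proof -
    have "\<mu>0 * M = (\<Sum>I\<in>incr_indices n p. \<mu>0 * inner2 n (xi n p g I) (xi n p g I))"
      unfolding M[symmetric] by (simp add: sum_distrib_left)
    also have "\<dots> \<le> S" unfolding S_def
      by (intro sum_mono) (simp add: QI NI b0)
    finally show ?thesis .
  qed
  have up: "S \<le> \<mu>1 * M"
  proof -
    have "S \<le> (\<Sum>I\<in>incr_indices n p. \<mu>1 * inner2 n (xi n p g I) (xi n p g I))" unfolding S_def
      by (intro sum_mono) (simp add: QI NI b1)
    also have "\<dots> = \<mu>1 * M"
      unfolding M[symmetric] by (simp add: sum_distrib_left)
    finally show ?thesis .
  qed
  have "lambda_R n R * M \<le> \<mu>0 * M" using l0 Mnn by (rule mult_right_mono)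
  moreover have "\<mu>1 * M \<le> Lambda_R n R * M" using l1 Mnn by (rule mult_right_mono)
  ultimately show ?thesis using low up unfolding S_def M_def by (simp add: algebra_simps)
qed

end
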